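(* We have $(\chi^L_k)^\dagger=\chi^L_{-k}$ for $k\in\pm\mathcal K^{(\ell_L)}$ and $(\chi^R_k)^\dagger=\chi^R_{-k}$ for $k\in\pm\mathcal K^{(\ell_R)}$; $\{\chi^L_{k_1},\chi^L_{k_2}\}=\delta_{k_1,-k_2}\mathrm{id}$ for $k_1,k_2\in\pm\mathcal K^{(\ell_L)}$; $\{\chi^R_{k_1},\chi^R_{k_2}\}=\delta_{k_1,-k_2}\mathrm{id}$ for $k_1,k_2\in\pm\mathcal K^{(\ell_R)}$; and $\{\chi^L_k,\chi^R_{k'}\}=0$ for $k\in\pm\mathcal K^{(\ell_L)}$, $k'\in\pm\mathcal K^{(\ell_R)}$. Here $\{A,B\}=AB+BA$.
   Context: Fix integers $a<0<b$, $\ell_L=-a$, $\ell_R=b$; for a positive integer $n$, $\mathcal K^{(n)}=\{\frac12,\dots,n-\frac12\}$, $\pm\mathcal K^{(n)}=\mathcal K^{(n)}\cup(-\mathcal K^{(n)})$. $C=\{a,\dots,b\}$, $C^*=\{a+\frac12,\dots,b-\frac12\}$, $C^*_L=\{a+\frac12,\dots,-\frac12\}$, $C^*_R=\{\frac12,\dots,b-\frac12\}$. $\tilde V$ is the complex inner product space with orthonormal basis $(e_\rho)_{\rho\in\{\pm1\}^C}$, $\dagger$ the adjoint. For $x'\in C^*$, $\varsigma_{x'}(\rho)$ flips the signs of $\rho_x$, $x<x'$; $\psi_{x'}e_\rho=\frac{-\rho_{x'-1/2}+i\rho_{x'+1/2}}{\sqrt2}e_{\varsigma_{x'}(\rho)}$,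 $\psi^*_{x'}e_\rho=\frac{-i\rho_{x'-1/2}+\rho_{x'+1/2}}{\sqrt2}e_{\varsigma_{x'}(\rho)}$. Substrip eigenfunctions: for integers $a'<b'$, $n=b'-a'$, on the lattice strip $\{a',\dots,b'\}\times\mathbb Z\subset\mathbb C$ with nearest-neighbour edges (identified with midpoints), $F$ is s-holomorphic if $F(z_1)+\frac{i|v-p|}{v-p}\overline{F(z_1)}=F(z_2)+\frac{i|v-p|}{v-p}\overline{F(z_2)}$ for edges adjacent to a common vertex $v$ and face $p$, with Riemann boundary values if $F(a'+iy')\in e^{-i\pi/4}\mathbb R$, $F(b'+iy')\in e^{i\pi/4}\mathbb R$. For $k\in\mathcal K^{(n)}$ let $\omega_k\in((k-\frac12)\pi/n,k\pi/n)$ solve $\cos((n+\frac12)\omega)/\cos((n-\frac12)\omega)=3-2\sqrt2$, $\lambda^{(n)}_{\pm k}=(2-\cos\omega_k+\sqrt{(3-\cos\omega_k)(1-\cos\omega_k)})^{\pm1}$; $F_{\pm k}$ is the unique s-holomorphic function with Riemann boundary values, $F_{\pm k}(z+ih)=(\lambda^{(n)}_{\pm k})^hF_{\pm k}(z)$, values in $e^{-i\pi/4}\mathbb R_{>0}$ on edges $a'+iy'$, and unit-norm restriction to the height-0 horizontal edges $\{a'+\frac12,\dots,b'-\frac12\}$, the norm coming from $\langle f,g\rangle=\mathrm{Re}\sum f\bar g$. Known facts: these restrictions $f_{k}$, $k\in\pm\mathcal K^{(n)}$, form an orthonormal basis of $\mathbb C^{\{a'+1/2,\dots,b'-1/2\}}$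 and satisfy $f_{-k}=-i\overline{f_k}$. Let $f^L_k$ ($k\in\pm\mathcal K^{(\ell_L)}$) be these restrictions for $(a',b')=(a,0)$ (functions on $C^*_L$) and $f^R_k$ ($k\in\pm\mathcal K^{(\ell_R)}$) those for $(a',b')=(0,b)$ (functions on $C^*_R$). Modes: $\chi^L_k=\frac{e^{i\pi/4}}{2}\sum_{x'\in C^*_L}(i f^L_k(x')\psi_{x'}-i\overline{f^L_k(x')}\psi^*_{x'})$ and $\chi^R_k=\frac{e^{i\pi/4}}{2}\sum_{x'\in C^*_R}(i f^R_k(x')\psi_{x'}-i\overline{f^R_k(x')}\psi^*_{x'})$. *)

theory Defs
  imports "HOL-Analysis.Analysis"
begin

text \<open>Strip {a'..b'} x Z inside the complex plane. Edges are identified with their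
midpoints, vertices are lattice points, faces are identified with their centres.\<close>

definition strip_edges :: "int \<Rightarrow> int \<Rightarrow> complex set" where
  "strip_edges a' b' =
     {Complex (of_int x + 1/2) (of_int y) | x y. a' \<le> x \<and> x < b'} \<union>
     {Complex (of_int x) (of_int y + 1/2) | x y. a' \<le> x \<and> x \<le> b'}"

definition strip_vertices :: "int \<Rightarrow> int \<Rightarrow> complex set" where
  "strip_vertices a' b' = {Complex (of_int x) (of_int y) | x y. a' \<le> x \<and> x \<le> b'}"

definition strip_faces :: "int \<Rightarrow> int \<Rightarrow> complex set" where
  "strip_faces a' b' = {Complex (of_int x + 1/2) (of_int y + 1/2) | x y. a' \<le> x \<and> x < b'}"

text \<open>An edge (midpoint z) is adjacent to a vertex v resp. a face p iff |z - v| = 1/2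
resp. |z - p| = 1/2.\<close>

definition s_holomorphic :: "int \<Rightarrow> int \<Rightarrow> (complex \<Rightarrow> complex) \<Rightarrow> bool" where
  "s_holomorphic a' b' F \<longleftrightarrow>
     (\<forall>z1\<in>strip_edges a' b'. \<forall>z2\<in>strip_edges a' b'.
      \<forall>v\<in>strip_vertices a' b'. \<forall>p\<in>strip_faces a' b'.
        cmod (z1 - v) = 1/2 \<and> cmod (z1 - p) = 1/2 \<and>
        cmod (z2 - v) = 1/2 \<and> cmod (z2 - p) = 1/2 \<longrightarrow>
        F z1 + \<i> * (of_real (cmod (v - p)) / (v - p)) * cnj (F z1)
          = F z2 + \<i> * (of_real (cmod (v - p)) / (v - p)) * cnj (F z2))"

definition riemann_bv :: "int \<Rightarrow> int \<Rightarrow> (complex \<Rightarrow> complex) \<Rightarrow> bool" where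
  "riemann_bv a' b' F \<longleftrightarrow>
     (\<forall>y::int. \<exists>r::real. F (Complex (of_int a') (of_int y + 1/2)) = cis (- pi/4) * of_real r) \<and>
     (\<forall>y::int. \<exists>r::real. F (Complex (of_int b') (of_int y + 1/2)) = cis (pi/4) * of_real r)"

definition Kset :: "nat \<Rightarrow> real set" where
  "Kset n = {k. \<exists>m::nat. m < n \<and> k = real m + 1/2}"

definition pmK :: "nat \<Rightarrow> real set" where
  "pmK n = Kset n \<union> uminus ` Kset n"

definition omega :: "nat \<Rightarrow> real \<Rightarrow> real" where
  "omega n k = (SOME w. (k - 1/2) * pi / real n < w \<and> w < k * pi / real n \<and>
       cos ((real n + 1/2) * w) / cos ((real n - 1/2) * w) = 3 - 2 * sqrt 2)"

definition lam :: "nat \<Rightarrow> real \<Rightarrow> real" where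
  "lam n k = (let w = omega n \<bar>k\<bar>;
                  base = 2 - cos w + sqrt ((3 - cos w) * (1 - cos w))
              in if k > 0 then base else inverse base)"

text \<open>The restriction f_k of F_k to the height-0 horizontal edges; the value at the
edge with midpoint j + 1/2 (a' \<le> j < b') is stored at index j (zero elsewhere).\<close>

definition eigf :: "int \<Rightarrow> int \<Rightarrow> real \<Rightarrow> int \<Rightarrow> complex" where
  "eigf a' b' k = (THE f. (\<forall>j. \<not> (a' \<le> j \<and> j < b') \<longrightarrow> f j = 0) \<and>
     (\<exists>F. s_holomorphic a' b' F \<and> riemann_bv a' b' F \<and>
        (\<forall>z\<in>strip_edges a' b'. \<forall>h::int.
            F (z + \<i> * of_int h) = of_real (lam (nat (b' - a')) k powi h) * F z) \<and>
        (\<forall>y::int. \<exists>r::real. r > 0 \<and>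
            F (Complex (of_int a') (of_int y + 1/2)) = cis (- pi/4) * of_real r) \<and>
        (\<Sum>j\<in>{a'..<b'}. (cmod (F (Complex (of_int j + 1/2) 0)))\<^sup>2) = 1 \<and>
        (\<forall>j. a' \<le> j \<and> j < b' \<longrightarrow> f j = F (Complex (of_int j + 1/2) 0))))"

definition Conf :: "int \<Rightarrow> int \<Rightarrow> (int \<Rightarrow> int) set" where
  "Conf a b = {\<rho>. (\<forall>x. a \<le> x \<and> x \<le> b \<longrightarrow> \<rho> x = 1 \<or> \<rho> x = -1) \<and>
                   (\<forall>x. \<not> (a \<le> x \<and> x \<le> b) \<longrightarrow> \<rho> x = 1)}"

text \<open>Vectors of V~: coefficient functions w.r.t. the orthonormal basis e_rho.\<close>

definition Vt :: "int \<Rightarrow> int \<Rightarrow> ((int \<Rightarrow> int) \<Rightarrow> complex) set" where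
  "Vt a b = {v. \<forall>\<rho>. \<rho> \<notin> Conf a b \<longrightarrow> v \<rho> = 0}"

definition inner_V :: "int \<Rightarrow> int \<Rightarrow> ((int \<Rightarrow> int) \<Rightarrow> complex) \<Rightarrow> ((int \<Rightarrow> int) \<Rightarrow> complex) \<Rightarrow> complex" where
  "inner_V a b v w = (\<Sum>\<rho>\<in>Conf a b. v \<rho> * cnj (w \<rho>))"

definition basis_e :: "(int \<Rightarrow> int) \<Rightarrow> (int \<Rightarrow> int) \<Rightarrow> complex" where
  "basis_e \<rho> = (\<lambda>\<sigma>. if \<sigma> = \<rho> then 1 else 0)"

text \<open>The half-integer x' = j + 1/2 is represented by the integer j.
varsigma_{x'} flips rho_x for x < x', i.e. x \<le> j, x in C.\<close>

definition flip :: "int \<Rightarrow> int \<Rightarrow> int \<Rightarrow> (int \<Rightarrow> int) \<Rightarrow> (int \<Rightarrow> int)" where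
  "flip a b j \<rho> = (\<lambda>x. if a \<le> x \<and> x \<le> b \<and> x \<le> j then - \<rho> x else \<rho> x)"

definition psi :: "int \<Rightarrow> int \<Rightarrow> int \<Rightarrow> ((int \<Rightarrow> int) \<Rightarrow> complex) \<Rightarrow> ((int \<Rightarrow> int) \<Rightarrow> complex)" where
  "psi a b j v = (\<lambda>\<sigma>. \<Sum>\<rho>\<in>Conf a b. v \<rho> *
      ((- of_int (\<rho> j) + \<i> * of_int (\<rho> (j+1))) / of_real (sqrt 2)) * basis_e (flip a b j \<rho>) \<sigma>)"

definition psi_star :: "int \<Rightarrow> int \<Rightarrow> int \<Rightarrow> ((int \<Rightarrow> int) \<Rightarrow> complex) \<Rightarrow> ((int \<Rightarrow> int) \<Rightarrow> complex)" where
  "psi_star a b j v = (\<lambda>\<sigma>. \<Sum>\<rho>\<in>Conf a b. v \<rho> *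
      ((- \<i> * of_int (\<rho> j) + of_int (\<rho> (j+1))) / of_real (sqrt 2)) * basis_e (flip a b j \<rho>) \<sigma>)"

definition fL :: "int \<Rightarrow> real \<Rightarrow> int \<Rightarrow> complex" where
  "fL a k = eigf a 0 k"

definition fR :: "int \<Rightarrow> real \<Rightarrow> int \<Rightarrow> complex" where
  "fR b k = eigf 0 b k"

definition chiL :: "int \<Rightarrow> int \<Rightarrow> real \<Rightarrow> ((int \<Rightarrow> int) \<Rightarrow> complex) \<Rightarrow> ((int \<Rightarrow> int) \<Rightarrow> complex)" where
  "chiL a b k v = (\<lambda>\<sigma>. cis (pi/4) / 2 * (\<Sum>j\<in>{a..<0}.
      \<i> * fL a k j * psi a b j v \<sigma> - \<i> * cnj (fL a k j) * psi_star a b j v \<sigma>))"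

definition chiR :: "int \<Rightarrow> int \<Rightarrow> real \<Rightarrow> ((int \<Rightarrow> int) \<Rightarrow> complex) \<Rightarrow> ((int \<Rightarrow> int) \<Rightarrow> complex)" where
  "chiR a b k v = (\<lambda>\<sigma>. cis (pi/4) / 2 * (\<Sum>j\<in>{0..<b}.
      \<i> * fR b k j * psi a b j v \<sigma> - \<i> * cnj (fR b k j) * psi_star a b j v \<sigma>))"

end

theory Submission
  imports Defs
begin

lemma flip_flip[simp]: "flip a b j (flip a b j \<rho>) = \<rho>"
  by (rule ext) (simp add: flip_def)

lemma flip_comm: "flip a b j (flip a b j' \<rho>) = flip a b j' (flip a b j \<rho>)"
  by (rule ext) (simp add: flip_def)

lemma flip_Conf[simp]: "flip a b j \<rho> \<in> Conf a b \<longleftrightarrow> \<rho> \<in> Conf a b"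
  unfolding Conf_def flip_def by (auto split: if_splits)

lemma finite_Conf: "finite (Conf a b)"
proof -
  let ?E = "{a..b} \<rightarrow>\<^sub>E ({1,-1}::int set)"
  let ?r = "\<lambda>g x. if x \<in> {a..b} then g x else (1::int)"
  have "finite ?E" by (intro finite_PiE) auto
  moreover have "Conf a b \<subseteq> ?r ` ?E"
  proof
    fix \<rho> assume h: "\<rho> \<in> Conf a b"
    have "\<rho> = ?r (restrict \<rho> {a..b})" using h unfolding Conf_def by (auto simp: fun_eq_iff)
    moreover have "restrict \<rho> {a..b} \<in> ?E" using h unfolding Conf_def by auto
    ultimately show "\<rho> \<in> ?r ` ?E" by blast
  qed
  ultimately show ?thesis by (meson finite_surj)
qed

definition cf :: "bool \<Rightarrow> int \<Rightarrow> (int \<Rightarrow> int) \<Rightarrow> complex" where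
  "cf s j \<rho> = (if s then (- \<i> * of_int (\<rho> j) + of_int (\<rho> (j+1))) / of_real (sqrt 2)
      else (- of_int (\<rho> j) + \<i> * of_int (\<rho> (j+1))) / of_real (sqrt 2))"

lemma sum_flip_delta:
  "(\<Sum>\<rho>\<in>Conf a b. g \<rho> * basis_e (flip a b j \<rho>) \<sigma>) = (if \<sigma> \<in> Conf a b then g (flip a b j \<sigma>) else 0)"
proof -
  have eq: "\<And>\<rho>. g \<rho> * basis_e (flip a b j \<rho>) \<sigma> = (if \<rho> = flip a b j \<sigma> then g \<rho> else 0)"
  proof -
    fix \<rho> show "g \<rho> * basis_e (flip a b j \<rho>) \<sigma> = (if \<rho> = flip a b j \<sigma> then g \<rho> else 0)"
    proof (cases "\<rho> = flip a b j \<sigma>")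
      case True then show ?thesis by (simp add: basis_e_def)
    next
      case False
      then have "flip a b j \<rho> \<noteq> \<sigma>" by auto
      with False show ?thesis by (simp add: basis_e_def)
    qed
  qed
  have "(\<Sum>\<rho>\<in>Conf a b. g \<rho> * basis_e (flip a b j \<rho>) \<sigma>) = (\<Sum>\<rho>\<in>Conf a b. if \<rho> = flip a b j \<sigma> then g \<rho> else 0)"
    by (rule sum.cong[OF refl]) (rule eq)
  also have "\<dots> = (if flip a b j \<sigma> \<in> Conf a b then g (flip a b j \<sigma>) else 0)"
    using finite_Conf by (simp add: sum.delta)
  finally show ?thesis by simp
qed

lemma psi_pt: "psi a b j v \<sigma> = (if \<sigma> \<in> Conf a b then v (flip a b j \<sigma>) * cf False j (flip a b j \<sigma>) else 0)"
  unfolding psi_def using sum_flip_delta[of "\<lambda>\<rho>. v \<rho> * ((- of_int (\<rho> j) + \<i> * of_int (\<rho> (j+1))) / of_real (sqrt 2))"]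
  by (simp add: cf_def)

lemma psi_star_pt: "psi_star a b j v \<sigma> = (if \<sigma> \<in> Conf a b then v (flip a b j \<sigma>) * cf True j (flip a b j \<sigma>) else 0)"
  unfolding psi_star_def using sum_flip_delta[of "\<lambda>\<rho>. v \<rho> * ((- \<i> * of_int (\<rho> j) + of_int (\<rho> (j+1))) / of_real (sqrt 2))"]
  by (simp add: cf_def)

definition gen :: "int \<Rightarrow> int \<Rightarrow> int \<times> bool \<Rightarrow> ((int \<Rightarrow> int) \<Rightarrow> complex) \<Rightarrow> ((int \<Rightarrow> int) \<Rightarrow> complex)" where
  "gen a b p = (if snd p then psi_star a b (fst p) else psi a b (fst p))"

lemma gen_pt: "gen a b p v \<sigma> = (if \<sigma> \<in> Conf a b then v (flip a b (fst p) \<sigma>) * cf (snd p) (fst p) (flip a b (fst p) \<sigma>) else 0)"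
  by (simp add: gen_def psi_pt psi_star_pt)

lemma sqrt2c: "complex_of_real (sqrt 2) * complex_of_real (sqrt 2) = 2"
  by (simp flip: of_real_mult)

lemma cf_pair:
  assumes "\<rho> \<in> Conf a b" "a \<le> j" "j < b"
  shows "cf s j \<rho> * cf s' j (flip a b j \<rho>) + cf s' j \<rho> * cf s j (flip a b j \<rho>) = (if s = s' then (if s then 2 else -2) else 0)"
proof -
  have r1: "\<rho> j = 1 \<or> \<rho> j = -1" and r2: "\<rho> (j+1) = 1 \<or> \<rho> (j+1) = -1"
    using assms unfolding Conf_def by auto
  have f1: "flip a b j \<rho> j = - \<rho> j" and f2: "flip a b j \<rho> (j+1) = \<rho> (j+1)"
    using assms by (auto simp: flip_def)
  define x where "x = complex_of_real (sqrt 2)"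
  have x2: "x * x = 2" unfolding x_def by (rule sqrt2c)
  have xnz: "x \<noteq> 0" unfolding x_def by simp
  show ?thesis unfolding cf_def f1 f2 x_def[symmetric]
    using r1 r2 x2 xnz
    apply (cases s; cases s')
    apply (elim disjE; simp add: field_simps power2_eq_square algebra_simps)+
    done
qed

lemma cf_flip_other:
  assumes "a \<le> j" "j < j'" "j' \<le> b"
  shows "cf s j (flip a b j' \<rho>) = - cf s j \<rho>"
  using assms by (cases s) (auto simp: cf_def flip_def field_simps)

lemma cf_flip_lower:
  assumes "j < j'"
  shows "cf s j' (flip a b j \<rho>) = cf s j' \<rho>"
  using assms by (cases s) (auto simp: cf_def flip_def)

lemma gen_anti_lt:
  assumes "\<sigma> \<in> Conf a b" "a \<le> fst p" "fst p < fst q" "fst q < b"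
  shows "gen a b p (gen a b q v) \<sigma> + gen a b q (gen a b p v) \<sigma> = 0"
proof -
  obtain j s where p: "p = (j, s)" by (cases p)
  obtain j' s' where q: "q = (j', s')" by (cases q)
  have jj: "a \<le> j" "j < j'" "j' < b" using assms p q by auto
  have e1: "cf s' j' (flip a b j (flip a b j' \<sigma>)) = cf s' j' (flip a b j' \<sigma>)"
    by (rule cf_flip_lower[OF jj(2)])
  have e2: "cf s j (flip a b j (flip a b j' \<sigma>)) = - cf s j (flip a b j \<sigma>)"
    using flip_comm cf_flip_other jj by (metis less_imp_le)
  show ?thesis using assms
    by (simp add: gen_pt p q e1 e2 flip_comm[of a b j' j])
qed

lemma gen_anti:
  assumes "v \<in> Vt a b" "fst p \<in> {a..<b}" "fst q \<in> {a..<b}"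
  shows "gen a b p (gen a b q v) \<sigma> + gen a b q (gen a b p v) \<sigma> = (if p = q then (if snd p then 2 else -2) * v \<sigma> else 0)"
proof (cases "\<sigma> \<in> Conf a b")
  case False
  then show ?thesis using assms(1) by (simp add: gen_pt Vt_def)
next
  case C: True
  obtain j s where p: "p = (j, s)" by (cases p)
  obtain j' s' where q: "q = (j', s')" by (cases q)
  consider "j = j'" | "j < j'" | "j' < j" by linarith
  then show ?thesis
  proof cases
    case 1
    have "gen a b p (gen a b q v) \<sigma> + gen a b q (gen a b p v) \<sigma>
        = v \<sigma> * (cf s j \<sigma> * cf s' j (flip a b j \<sigma>) + cf s' j \<sigma> * cf s j (flip a b j \<sigma>))"
      using C by (simp add: gen_pt p q 1 algebra_simps)
    also have "\<dots> = (if p = q then (if snd p then 2 else -2) * v \<sigma> else 0)"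
      using cf_pair[OF C, of j s s'] assms p q 1 by auto
    finally show ?thesis .
  next
    case 2
    then show ?thesis using gen_anti_lt[OF C, of p q v] assms p q by auto
  next
    case 3
    then show ?thesis using gen_anti_lt[OF C, of q p v] assms p q by (auto simp: add.commute)
  qed
qed


definition opsum :: "int \<Rightarrow> int \<Rightarrow> (int \<times> bool \<Rightarrow> complex) \<Rightarrow> (int \<times> bool) set \<Rightarrow> ((int \<Rightarrow> int) \<Rightarrow> complex) \<Rightarrow> ((int \<Rightarrow> int) \<Rightarrow> complex)" where
  "opsum a b A I v = (\<lambda>\<sigma>. \<Sum>p\<in>I. A p * gen a b p v \<sigma>)"

lemma gen_lin: "gen a b p (\<lambda>\<sigma>. \<Sum>q\<in>J. B q * w q \<sigma>) \<sigma> = (\<Sum>q\<in>J. B q * gen a b p (w q) \<sigma>)"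
  by (simp add: gen_pt sum_distrib_right mult.assoc)

lemma opsum_comp: "opsum a b A I (opsum a b B J v) \<sigma> = (\<Sum>p\<in>I. \<Sum>q\<in>J. A p * B q * gen a b p (gen a b q v) \<sigma>)"
  unfolding opsum_def gen_lin by (simp add: sum_distrib_left mult.assoc)

definition eta :: "int \<times> bool \<Rightarrow> complex" where
  "eta p = (if snd p then 2 else -2)"

lemma opsum_anti:
  assumes "fst ` I \<subseteq> {a..<b}" "fst ` J \<subseteq> {a..<b}" "v \<in> Vt a b"
  shows "opsum a b A I (opsum a b B J v) \<sigma> + opsum a b B J (opsum a b A I v) \<sigma>
     = (\<Sum>p\<in>I. \<Sum>q\<in>J. A p * B q * (if p = q then eta p * v \<sigma> else 0))"
proof -
  have "opsum a b B J (opsum a b A I v) \<sigma> = (\<Sum>q\<in>J. \<Sum>p\<in>I. B q * A p * gen a b q (gen a b p v) \<sigma>)"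
    by (rule opsum_comp)
  also have "\<dots> = (\<Sum>p\<in>I. \<Sum>q\<in>J. A p * B q * gen a b q (gen a b p v) \<sigma>)"
    by (subst sum.swap) (simp add: mult.commute)
  finally have 2: "opsum a b B J (opsum a b A I v) \<sigma> = \<dots>" .
  have 1: "opsum a b A I (opsum a b B J v) \<sigma> = (\<Sum>p\<in>I. \<Sum>q\<in>J. A p * B q * gen a b p (gen a b q v) \<sigma>)"
    by (rule opsum_comp)
  have "opsum a b A I (opsum a b B J v) \<sigma> + opsum a b B J (opsum a b A I v) \<sigma>
     = (\<Sum>p\<in>I. \<Sum>q\<in>J. A p * B q * (gen a b p (gen a b q v) \<sigma> + gen a b q (gen a b p v) \<sigma>))"
    by (simp only: 1 2 sum.distrib[symmetric] distrib_left)
  also have "\<dots> = (\<Sum>p\<in>I. \<Sum>q\<in>J. A p * B q * (if p = q then eta p * v \<sigma> else 0))"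
  proof (rule sum.cong[OF refl], rule sum.cong[OF refl])
    fix p q assume "p \<in> I" "q \<in> J"
    then have "fst p \<in> {a..<b}" "fst q \<in> {a..<b}" using assms by auto
    then show "A p * B q * (gen a b p (gen a b q v) \<sigma> + gen a b q (gen a b p v) \<sigma>) =
         A p * B q * (if p = q then eta p * v \<sigma> else 0)"
      using gen_anti[OF assms(3)] by (simp add: eta_def)
  qed
  finally show ?thesis .
qed

lemma opsum_anti_same:
  assumes "finite I" "fst ` I \<subseteq> {a..<b}" "v \<in> Vt a b"
  shows "opsum a b A I (opsum a b B I v) \<sigma> + opsum a b B I (opsum a b A I v) \<sigma>
     = (\<Sum>p\<in>I. A p * B p * eta p) * v \<sigma>"
proof -
  have "\<And>p. p \<in> I \<Longrightarrow> (\<Sum>q\<in>I. A p * B q * (if p = q then eta p * v \<sigma> else 0))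
        = A p * B p * eta p * v \<sigma>"
  proof -
    fix p assume p: "p \<in> I"
    have "(\<Sum>q\<in>I. A p * B q * (if p = q then eta p * v \<sigma> else 0))
        = (\<Sum>q\<in>I. if q = p then A p * B p * eta p * v \<sigma> else 0)"
      by (rule sum.cong) (auto simp: mult.assoc)
    also have "\<dots> = A p * B p * eta p * v \<sigma>" using assms(1) p by (simp add: sum.delta')
    finally show "(\<Sum>q\<in>I. A p * B q * (if p = q then eta p * v \<sigma> else 0)) = A p * B p * eta p * v \<sigma>" .
  qed
  then show ?thesis using opsum_anti[OF assms(2) assms(2) assms(3)]
    by (simp add: sum_distrib_right)
qed

lemma opsum_anti_disj:
  assumes "I \<inter> J = {}" "fst ` I \<subseteq> {a..<b}" "fst ` J \<subseteq> {a..<b}" "v \<in> Vt a b"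
  shows "opsum a b A I (opsum a b B J v) \<sigma> + opsum a b B J (opsum a b A I v) \<sigma> = 0"
proof -
  have "\<And>p q. p \<in> I \<Longrightarrow> q \<in> J \<Longrightarrow> p \<noteq> q" using assms(1) by auto
  then show ?thesis unfolding opsum_anti[OF assms(2,3,4)]
    by (intro sum.neutral ballI) auto
qed

lemma sum_flip: "(\<Sum>\<sigma>\<in>Conf a b. g (flip a b j \<sigma>)) = (\<Sum>\<sigma>\<in>Conf a b. g \<sigma>)"
  by (rule sum.reindex_bij_witness[of _ "flip a b j" "flip a b j"]) auto

definition eps :: "int \<times> bool \<Rightarrow> complex" where
  "eps p = (if snd p then 1 else -1)"

lemma cf_adj: assumes "a \<le> j" "j \<le> b"
  shows "cf s j \<rho> = (if s then 1 else -1) * cnj (cf s j (flip a b j \<rho>))"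
  using assms by (cases s) (auto simp: cf_def flip_def field_simps)

lemma inner_gen:
  assumes "fst p \<in> {a..<b}"
  shows "inner_V a b (gen a b p v) w = eps p * inner_V a b v (gen a b p w)"
proof -
  obtain j s where p: "p = (j, s)" by (cases p)
  have jj: "a \<le> j" "j \<le> b" using assms p by auto
  have "inner_V a b (gen a b p v) w = (\<Sum>\<sigma>\<in>Conf a b. v (flip a b j \<sigma>) * cf s j (flip a b j \<sigma>) * cnj (w \<sigma>))"
    unfolding inner_V_def by (rule sum.cong) (auto simp: gen_pt p)
  also have "\<dots> = (\<Sum>\<sigma>\<in>Conf a b. v \<sigma> * cf s j \<sigma> * cnj (w (flip a b j \<sigma>)))"
    using sum_flip[where a=a and b=b and g="\<lambda>\<sigma>. v \<sigma> * cf s j \<sigma> * cnj (w (flip a b j \<sigma>))" and j=j] by simp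
  also have "\<dots> = eps p * (\<Sum>\<sigma>\<in>Conf a b. v \<sigma> * cnj (w (flip a b j \<sigma>) * cf s j (flip a b j \<sigma>)))"
    unfolding sum_distrib_left
    by (rule sum.cong[OF refl]) (subst cf_adj[OF jj], auto simp: eps_def p)
  also have "\<dots> = eps p * inner_V a b v (gen a b p w)"
    unfolding inner_V_def by (auto simp: gen_pt p intro!: sum.cong)
  finally show ?thesis .
qed

lemma opsum_adj:
  assumes "finite I" "fst ` I \<subseteq> {a..<b}" "\<And>p. p \<in> I \<Longrightarrow> B p = cnj (A p) * eps p"
  shows "inner_V a b (opsum a b A I v) w = inner_V a b v (opsum a b B I w)"
proof -
  have "inner_V a b (opsum a b A I v) w = (\<Sum>p\<in>I. A p * inner_V a b (gen a b p v) w)"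
    unfolding inner_V_def opsum_def
    by (simp add: sum_distrib_right sum_distrib_left mult.assoc sum.swap[of _ "Conf a b"])
  also have "\<dots> = (\<Sum>p\<in>I. cnj (B p) * inner_V a b v (gen a b p w))"
  proof (rule sum.cong[OF refl])
    fix p assume p: "p \<in> I"
    then have "fst p \<in> {a..<b}" using assms by auto
    then show "A p * inner_V a b (gen a b p v) w = cnj (B p) * inner_V a b v (gen a b p w)"
      using assms(3)[OF p] by (simp add: inner_gen eps_def)
  qed
  also have "\<dots> = inner_V a b v (opsum a b B I w)"
    unfolding inner_V_def opsum_def
    by (simp add: sum_distrib_right sum_distrib_left mult.assoc mult.left_commute sum.swap[of _ "Conf a b"])
  finally show ?thesis .
qed


definition coef :: "(int \<Rightarrow> complex) \<Rightarrow> int \<times> bool \<Rightarrow> complex" where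
  "coef f p = (if snd p then - (cis (pi/4) / 2 * \<i> * cnj (f (fst p))) else cis (pi/4) / 2 * \<i> * f (fst p))"

lemma cis_pi4: "cis (pi/4) = Complex (sqrt 2 / 2) (sqrt 2 / 2)"
  by (simp add: cis.ctr cos_45 sin_45)

lemma chiL_opsum: "chiL a b k v = opsum a b (coef (fL a k)) ({a..<0} \<times> UNIV) v"
proof
  fix \<sigma>
  show "chiL a b k v \<sigma> = opsum a b (coef (fL a k)) ({a..<0} \<times> UNIV) v \<sigma>"
    unfolding chiL_def opsum_def sum.cartesian_product' UNIV_bool
    by (simp add: sum_distrib_left coef_def gen_def algebra_simps)
qed

lemma chiR_opsum: "chiR a b k v = opsum a b (coef (fR b k)) ({0..<b} \<times> UNIV) v"
proof
  fix \<sigma>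
  show "chiR a b k v \<sigma> = opsum a b (coef (fR b k)) ({0..<b} \<times> UNIV) v \<sigma>"
    unfolding chiR_def opsum_def sum.cartesian_product' UNIV_bool
    by (simp add: sum_distrib_left coef_def gen_def algebra_simps)
qed

lemma sqrt2sq: "sqrt 2 * sqrt 2 = (2::real)" by simp

lemma coef_pair_j:
  "(\<Sum>s\<in>UNIV. coef f1 (j,s) * coef f2 (j,s) * eta (j,s))
     = of_real (Re (f1 j * cnj (- \<i> * cnj (f2 j))))"
  unfolding UNIV_bool coef_def eta_def cis_pi4
  by (simp add: complex_eq_iff algebra_simps sqrt2sq; simp add: field_simps)

lemma coef_adj:
  assumes "f' (fst p) = - \<i> * cnj (f (fst p))"
  shows "coef f' p = cnj (coef f p) * eps p"
  using assms unfolding coef_def eps_def cis_pi4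
  by (simp add: complex_eq_iff algebra_simps; simp add: field_simps)

lemma coef_sum:
  assumes "finite J" "\<forall>j\<in>J. f3 j = - \<i> * cnj (f2 j)"
  shows "(\<Sum>p\<in>J \<times> UNIV. coef f1 p * coef f2 p * eta p) = of_real (Re (\<Sum>j\<in>J. f1 j * cnj (f3 j)))"
proof -
  have "(\<Sum>p\<in>J \<times> UNIV. coef f1 p * coef f2 p * eta p) = (\<Sum>j\<in>J. \<Sum>s\<in>UNIV. coef f1 (j,s) * coef f2 (j,s) * eta (j,s))"
    by (rule sum.cartesian_product')
  also have "\<dots> = (\<Sum>j\<in>J. of_real (Re (f1 j * cnj (f3 j))))"
    using assms(2) by (intro sum.cong refl) (simp add: coef_pair_j)
  also have "\<dots> = of_real (Re (\<Sum>j\<in>J. f1 j * cnj (f3 j)))"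
    by (simp add: Re_sum)
  finally show ?thesis .
qed

theorem proposition5p13:
  fixes a b :: int
  assumes "a < 0" and "0 < b"
    and fL_orth: "\<forall>k1\<in>pmK (nat (-a)). \<forall>k2\<in>pmK (nat (-a)).
        Re (\<Sum>j\<in>{a..<0}. fL a k1 j * cnj (fL a k2 j)) = (if k1 = k2 then 1 else 0)"
    and fL_span: "\<forall>g::int \<Rightarrow> complex. \<exists>c::real \<Rightarrow> real.
        \<forall>j\<in>{a..<0}. g j = (\<Sum>k\<in>pmK (nat (-a)). of_real (c k) * fL a k j)"
    and fL_conj: "\<forall>k\<in>pmK (nat (-a)). \<forall>j\<in>{a..<0}. fL a (-k) j = - \<i> * cnj (fL a k j)"
    and fR_orth: "\<forall>k1\<in>pmK (nat b). \<forall>k2\<in>pmK (nat b).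
        Re (\<Sum>j\<in>{0..<b}. fR b k1 j * cnj (fR b k2 j)) = (if k1 = k2 then 1 else 0)"
    and fR_span: "\<forall>g::int \<Rightarrow> complex. \<exists>c::real \<Rightarrow> real.
        \<forall>j\<in>{0..<b}. g j = (\<Sum>k\<in>pmK (nat b). of_real (c k) * fR b k j)"
    and fR_conj: "\<forall>k\<in>pmK (nat b). \<forall>j\<in>{0..<b}. fR b (-k) j = - \<i> * cnj (fR b k j)"
  shows
    "(\<forall>k\<in>pmK (nat (-a)). \<forall>v\<in>Vt a b. \<forall>w\<in>Vt a b.
        inner_V a b (chiL a b k v) w = inner_V a b v (chiL a b (-k) w)) \<and>
     (\<forall>k\<in>pmK (nat b). \<forall>v\<in>Vt a b. \<forall>w\<in>Vt a b.
        inner_V a b (chiR a b k v) w = inner_V a b v (chiR a b (-k) w)) \<and>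
     (\<forall>k1\<in>pmK (nat (-a)). \<forall>k2\<in>pmK (nat (-a)). \<forall>v\<in>Vt a b.
        (\<lambda>\<sigma>. chiL a b k1 (chiL a b k2 v) \<sigma> + chiL a b k2 (chiL a b k1 v) \<sigma>)
          = (if k1 = - k2 then v else (\<lambda>_. 0))) \<and>
     (\<forall>k1\<in>pmK (nat b). \<forall>k2\<in>pmK (nat b). \<forall>v\<in>Vt a b.
        (\<lambda>\<sigma>. chiR a b k1 (chiR a b k2 v) \<sigma> + chiR a b k2 (chiR a b k1 v) \<sigma>)
          = (if k1 = - k2 then v else (\<lambda>_. 0))) \<and>
     (\<forall>k\<in>pmK (nat (-a)). \<forall>k'\<in>pmK (nat b). \<forall>v\<in>Vt a b.
        (\<lambda>\<sigma>. chiL a b k (chiR a b k' v) \<sigma> + chiR a b k' (chiL a b k v) \<sigma>) = (\<lambda>_. 0))"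
proof -
  define IL where "IL = {a..<0} \<times> (UNIV :: bool set)"
  define IR where "IR = {0..<b} \<times> (UNIV :: bool set)"
  have fIL: "finite IL" and fIR: "finite IR" unfolding IL_def IR_def by auto
  have sIL: "fst ` IL \<subseteq> {a..<b}" using assms(2) unfolding IL_def by auto
  have sIR: "fst ` IR \<subseteq> {a..<b}" using assms(1) unfolding IR_def by auto
  have dis: "IL \<inter> IR = {}" unfolding IL_def IR_def by auto
  have negK: "\<And>k n. k \<in> pmK n \<Longrightarrow> - k \<in> pmK n" unfolding pmK_def by auto
  have cL: "\<And>k. chiL a b k = opsum a b (coef (fL a k)) IL" unfolding IL_def using chiL_opsum by blast
  have cR: "\<And>k. chiR a b k = opsum a b (coef (fR b k)) IR" unfolding IR_def using chiR_opsum by blast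
  have P1: "\<forall>k\<in>pmK (nat (-a)). \<forall>v\<in>Vt a b. \<forall>w\<in>Vt a b.
        inner_V a b (chiL a b k v) w = inner_V a b v (chiL a b (-k) w)"
  proof (intro ballI)
    fix k v w assume k: "k \<in> pmK (nat (-a))"
    show "inner_V a b (chiL a b k v) w = inner_V a b v (chiL a b (-k) w)"
      unfolding cL
    proof (rule opsum_adj[OF fIL sIL])
      fix p assume "p \<in> IL"
      then have "fst p \<in> {a..<0}" unfolding IL_def by auto
      then show "coef (fL a (- k)) p = cnj (coef (fL a k) p) * eps p"
        using fL_conj k by (intro coef_adj) auto
    qed
  qed
  have P2: "\<forall>k\<in>pmK (nat b). \<forall>v\<in>Vt a b. \<forall>w\<in>Vt a b.
        inner_V a b (chiR a b k v) w = inner_V a b v (chiR a b (-k) w)"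
  proof (intro ballI)
    fix k v w assume k: "k \<in> pmK (nat b)"
    show "inner_V a b (chiR a b k v) w = inner_V a b v (chiR a b (-k) w)"
      unfolding cR
    proof (rule opsum_adj[OF fIR sIR])
      fix p assume "p \<in> IR"
      then have "fst p \<in> {0..<b}" unfolding IR_def by auto
      then show "coef (fR b (- k)) p = cnj (coef (fR b k) p) * eps p"
        using fR_conj k by (intro coef_adj) auto
    qed
  qed
  have P3: "\<forall>k1\<in>pmK (nat (-a)). \<forall>k2\<in>pmK (nat (-a)). \<forall>v\<in>Vt a b.
        (\<lambda>\<sigma>. chiL a b k1 (chiL a b k2 v) \<sigma> + chiL a b k2 (chiL a b k1 v) \<sigma>)
          = (if k1 = - k2 then v else (\<lambda>_. 0))"
  proof (intro ballI)
    fix k1 k2 v assume k1: "k1 \<in> pmK (nat (-a))" and k2: "k2 \<in> pmK (nat (-a))" and v: "v \<in> Vt a b"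
    have S: "(\<Sum>p\<in>IL. coef (fL a k1) p * coef (fL a k2) p * eta p) = (if k1 = - k2 then 1 else 0)"
    proof -
      have "(\<Sum>p\<in>IL. coef (fL a k1) p * coef (fL a k2) p * eta p)
          = of_real (Re (\<Sum>j\<in>{a..<0}. fL a k1 j * cnj (fL a (-k2) j)))"
        unfolding IL_def using fL_conj k2 by (intro coef_sum) auto
      also have "\<dots> = (if k1 = - k2 then 1 else 0)"
        using fL_orth k1 negK[OF k2] by simp
      finally show ?thesis .
    qed
    show "(\<lambda>\<sigma>. chiL a b k1 (chiL a b k2 v) \<sigma> + chiL a b k2 (chiL a b k1 v) \<sigma>)
          = (if k1 = - k2 then v else (\<lambda>_. 0))"
      unfolding cL opsum_anti_same[OF fIL sIL v] S by auto
  qed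
  have P4: "\<forall>k1\<in>pmK (nat b). \<forall>k2\<in>pmK (nat b). \<forall>v\<in>Vt a b.
        (\<lambda>\<sigma>. chiR a b k1 (chiR a b k2 v) \<sigma> + chiR a b k2 (chiR a b k1 v) \<sigma>)
          = (if k1 = - k2 then v else (\<lambda>_. 0))"
  proof (intro ballI)
    fix k1 k2 v assume k1: "k1 \<in> pmK (nat b)" and k2: "k2 \<in> pmK (nat b)" and v: "v \<in> Vt a b"
    have S: "(\<Sum>p\<in>IR. coef (fR b k1) p * coef (fR b k2) p * eta p) = (if k1 = - k2 then 1 else 0)"
    proof -
      have "(\<Sum>p\<in>IR. coef (fR b k1) p * coef (fR b k2) p * eta p)
          = of_real (Re (\<Sum>j\<in>{0..<b}. fR b k1 j * cnj (fR b (-k2) j)))"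
        unfolding IR_def using fR_conj k2 by (intro coef_sum) auto
      also have "\<dots> = (if k1 = - k2 then 1 else 0)"
        using fR_orth k1 negK[OF k2] by simp
      finally show ?thesis .
    qed
    show "(\<lambda>\<sigma>. chiR a b k1 (chiR a b k2 v) \<sigma> + chiR a b k2 (chiR a b k1 v) \<sigma>)
          = (if k1 = - k2 then v else (\<lambda>_. 0))"
      unfolding cR opsum_anti_same[OF fIR sIR v] S by auto
  qed
  have P5: "\<forall>k\<in>pmK (nat (-a)). \<forall>k'\<in>pmK (nat b). \<forall>v\<in>Vt a b.
        (\<lambda>\<sigma>. chiL a b k (chiR a b k' v) \<sigma> + chiR a b k' (chiL a b k v) \<sigma>) = (\<lambda>_. 0)"
    unfolding cL cR using opsum_anti_disj[OF dis sIL sIR] by auto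
  show ?thesis using P1 P2 P3 P4 P5 by blast
qed

end
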